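(* Let $B$ be a finite brace. Then $B$ is a one-generator brace (i.e. $B=B(x)$ for some $x\in B$) if and only if $B$ has a transitive cycle base $X$ such that $X$ is a one-generator cycle set.
   Context: A brace is a triple $(B,+,\circ)$ with $(B,+)$ an abelian group, $(B,\circ)$ a group, and $a\circ(b+c)=a\circ b-a+a\circ c$; $\lambda_a(b):=-a+a\circ b$, $a^-$ is the inverse of $a$ in $(B,\circ)$. $B$ is a cycle set via $a\cdot b:=\lambda_{a^-}(b)$. $B(x)$ is the smallest subset of $B$ containing $x$ that is a subgroup of both $(B,+)$ and $(B,\circ)$. A cycle set is a non-empty set with operation $\cdot$ such that each $y\mapsto x\cdot y$ is bijective and $(x\cdot y)\cdot(x\cdot z)=(y\cdot x)\cdot(y\cdot z)$; a sub-cycle set is a subset that is a cycle set under the restricted operation; $\langle x\rangle$ is the smallest sub-cycle set containing $x$, and a cycle set $X$ is one-generator if $X=\langle x\rangle$ for some $x\in X$. A transitive cycle base of $B$ is a subset that is a single orbit of the group generated by $\{\lambda_a:a\in B\}$ and generates $(B,+)$; it is a sub-cycle set of $B$ with the induced operation. *)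

theory Defs
  imports "HOL-Algebra.Algebra"
begin

definition addG :: "'a set \<Rightarrow> ('a \<Rightarrow> 'a \<Rightarrow> 'a) \<Rightarrow> 'a monoid" where
  "addG B p = \<lparr>carrier = B, monoid.mult = p,
     monoid.one = (THE e. e \<in> B \<and> (\<forall>x\<in>B. p e x = x \<and> p x e = x))\<rparr>"

definition mulG :: "'a set \<Rightarrow> ('a \<Rightarrow> 'a \<Rightarrow> 'a) \<Rightarrow> 'a monoid" where
  "mulG B c = \<lparr>carrier = B, monoid.mult = c,
     monoid.one = (THE e. e \<in> B \<and> (\<forall>x\<in>B. c e x = x \<and> c x e = x))\<rparr>"

definition brace :: "'a set \<Rightarrow> ('a \<Rightarrow> 'a \<Rightarrow> 'a) \<Rightarrow> ('a \<Rightarrow> 'a \<Rightarrow> 'a) \<Rightarrow> bool" where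
  "brace B p c \<longleftrightarrow> comm_group (addG B p) \<and> group (mulG B c) \<and>
     (\<forall>a\<in>B. \<forall>b\<in>B. \<forall>x\<in>B.
        c a (p b x) = p (p (c a b) (inv\<^bsub>addG B p\<^esub> a)) (c a x))"

definition blam :: "'a set \<Rightarrow> ('a \<Rightarrow> 'a \<Rightarrow> 'a) \<Rightarrow> ('a \<Rightarrow> 'a \<Rightarrow> 'a) \<Rightarrow> 'a \<Rightarrow> 'a \<Rightarrow> 'a" where
  "blam B p c a b = p (inv\<^bsub>addG B p\<^esub> a) (c a b)"

definition bdot :: "'a set \<Rightarrow> ('a \<Rightarrow> 'a \<Rightarrow> 'a) \<Rightarrow> ('a \<Rightarrow> 'a \<Rightarrow> 'a) \<Rightarrow> 'a \<Rightarrow> 'a \<Rightarrow> 'a" where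
  "bdot B p c a b = blam B p c (inv\<^bsub>mulG B c\<^esub> a) b"

definition brace_gen :: "'a set \<Rightarrow> ('a \<Rightarrow> 'a \<Rightarrow> 'a) \<Rightarrow> ('a \<Rightarrow> 'a \<Rightarrow> 'a) \<Rightarrow> 'a \<Rightarrow> 'a set" where
  "brace_gen B p c x = \<Inter>{S. x \<in> S \<and> subgroup S (addG B p) \<and> subgroup S (mulG B c)}"

definition one_generator_brace :: "'a set \<Rightarrow> ('a \<Rightarrow> 'a \<Rightarrow> 'a) \<Rightarrow> ('a \<Rightarrow> 'a \<Rightarrow> 'a) \<Rightarrow> bool" where
  "one_generator_brace B p c \<longleftrightarrow> (\<exists>x\<in>B. brace_gen B p c x = B)"

definition cycle_set :: "'a set \<Rightarrow> ('a \<Rightarrow> 'a \<Rightarrow> 'a) \<Rightarrow> bool" where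
  "cycle_set Cs dd \<longleftrightarrow> Cs \<noteq> {} \<and> (\<forall>x\<in>Cs. \<forall>y\<in>Cs. dd x y \<in> Cs) \<and>
     (\<forall>x\<in>Cs. bij_betw (dd x) Cs Cs) \<and>
     (\<forall>x\<in>Cs. \<forall>y\<in>Cs. \<forall>z\<in>Cs. dd (dd x y) (dd x z) = dd (dd y x) (dd y z))"

definition sub_cycle_set :: "'a set \<Rightarrow> ('a \<Rightarrow> 'a \<Rightarrow> 'a) \<Rightarrow> 'a set \<Rightarrow> bool" where
  "sub_cycle_set Cs dd Ds \<longleftrightarrow> Ds \<subseteq> Cs \<and> cycle_set Ds dd"

definition cs_gen :: "'a set \<Rightarrow> ('a \<Rightarrow> 'a \<Rightarrow> 'a) \<Rightarrow> 'a \<Rightarrow> 'a set" where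
  "cs_gen Cs dd x = \<Inter>{Ds. x \<in> Ds \<and> sub_cycle_set Cs dd Ds}"

definition one_generator_cycle_set :: "'a set \<Rightarrow> ('a \<Rightarrow> 'a \<Rightarrow> 'a) \<Rightarrow> bool" where
  "one_generator_cycle_set Cs dd \<longleftrightarrow> cycle_set Cs dd \<and> (\<exists>x\<in>Cs. cs_gen Cs dd x = Cs)"

text \<open>Orbit of x under the group generated by the permutations lambda_a of B
  (closure under all lambda_a and their inverses).\<close>
definition lam_orbit :: "'a set \<Rightarrow> ('a \<Rightarrow> 'a \<Rightarrow> 'a) \<Rightarrow> ('a \<Rightarrow> 'a \<Rightarrow> 'a) \<Rightarrow> 'a \<Rightarrow> 'a set" where
  "lam_orbit B p c x =
     (let R = {(u, blam B p c a u) | a u. a \<in> B \<and> u \<in> B} in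
      {y. (x, y) \<in> (R \<union> R\<inverse>)\<^sup>*})"

definition transitive_cycle_base :: "'a set \<Rightarrow> ('a \<Rightarrow> 'a \<Rightarrow> 'a) \<Rightarrow> ('a \<Rightarrow> 'a \<Rightarrow> 'a) \<Rightarrow> 'a set \<Rightarrow> bool" where
  "transitive_cycle_base B p c Cs \<longleftrightarrow> Cs \<subseteq> B \<and>
     (\<exists>x\<in>Cs. Cs = lam_orbit B p c x) \<and> generate (addG B p) Cs = B"

end

theory Submission imports Defs begin

lemma fin_closed_subgroup:
  fixes G (structure)
  assumes G: "group G" and fin: "finite (carrier G)" and sub: "S \<subseteq> carrier G"
    and one: "\<one>\<^bsub>G\<^esub> \<in> S" and mul: "\<And>a b. a \<in> S \<Longrightarrow> b \<in> S \<Longrightarrow> a \<otimes>\<^bsub>G\<^esub> b \<in> S"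
  shows "subgroup S G"
proof -
  interpret group G by (rule G)
  have finS: "finite S" using fin sub finite_subset by blast
  show ?thesis
  proof (rule subgroupI[OF sub])
    show "S \<noteq> {}" using one by blast
    show "a \<otimes> b \<in> S" if "a \<in> S" "b \<in> S" for a b using mul that by blast
    fix a assume a: "a \<in> S"
    have "(\<lambda>x. a \<otimes> x) ` S \<subseteq> S" using mul a by blast
    moreover have "inj_on (\<lambda>x. a \<otimes> x) S" using a sub by (intro inj_onI) (metis l_cancel subsetD)
    ultimately have "(\<lambda>x. a \<otimes> x) ` S = S" using endo_inj_surj finS by blast
    with one obtain y where y: "y \<in> S" "a \<otimes> y = \<one>" by (metis imageE)
    hence "y = inv a" using a sub using inv_unique[of "inv a" a y] l_inv[of a] inv_closed[of a] by blast
    thus "inv a \<in> S" using y by simp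
  qed
qed

inductive_set psums :: "'a \<Rightarrow> ('a \<Rightarrow> 'a \<Rightarrow> 'a) \<Rightarrow> 'a set \<Rightarrow> 'a set"
  for zz pp Y where
  sz: "zz \<in> psums zz pp Y"
| ss: "s \<in> psums zz pp Y \<Longrightarrow> y \<in> Y \<Longrightarrow> pp s y \<in> psums zz pp Y"

locale brc =
  fixes B :: "'a set" and p c :: "'a \<Rightarrow> 'a \<Rightarrow> 'a"
  assumes br: "brace B p c" and fin: "finite B"
begin

sublocale A: comm_group "addG B p" using br by (simp add: brace_def)
sublocale M: group "mulG B c" using br by (simp add: brace_def)

lemma cA[simp]: "carrier (addG B p) = B" by (simp add: addG_def)
lemma cM[simp]: "carrier (mulG B c) = B" by (simp add: mulG_def)
lemma mA[simp]: "x \<otimes>\<^bsub>addG B p\<^esub> y = p x y" by (simp add: addG_def)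
lemma mM[simp]: "x \<otimes>\<^bsub>mulG B c\<^esub> y = c x y" by (simp add: mulG_def)

abbreviation z where "z \<equiv> \<one>\<^bsub>addG B p\<^esub>"
abbreviation ng where "ng x \<equiv> inv\<^bsub>addG B p\<^esub> x"
abbreviation mi where "mi x \<equiv> inv\<^bsub>mulG B c\<^esub> x"
abbreviation lam where "lam \<equiv> blam B p c"

lemma distr: "a \<in> B \<Longrightarrow> b \<in> B \<Longrightarrow> x \<in> B \<Longrightarrow> c a (p b x) = p (p (c a b) (ng a)) (c a x)"
  using br by (simp add: brace_def)

lemma pB[simp]: "a \<in> B \<Longrightarrow> b \<in> B \<Longrightarrow> p a b \<in> B" using A.m_closed by simp
lemma cB[simp]: "a \<in> B \<Longrightarrow> b \<in> B \<Longrightarrow> c a b \<in> B" using M.m_closed by simp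
lemma zB[simp]: "z \<in> B" using A.one_closed by simp
lemma ngB[simp]: "a \<in> B \<Longrightarrow> ng a \<in> B" using A.inv_closed by simp
lemma miB[simp]: "a \<in> B \<Longrightarrow> mi a \<in> B" using M.inv_closed by simp

lemma pz[simp]: "x \<in> B \<Longrightarrow> p z x = x" "x \<in> B \<Longrightarrow> p x z = x"
  using A.l_one A.r_one by simp_all
lemma pinv[simp]: "x \<in> B \<Longrightarrow> p (ng x) x = z" "x \<in> B \<Longrightarrow> p x (ng x) = z"
  using A.l_inv A.r_inv by simp_all
lemma cone[simp]: "x \<in> B \<Longrightarrow> c \<one>\<^bsub>mulG B c\<^esub> x = x" "x \<in> B \<Longrightarrow> c x \<one>\<^bsub>mulG B c\<^esub> = x"
  using M.l_one M.r_one by simp_all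
lemma cinv[simp]: "x \<in> B \<Longrightarrow> c (mi x) x = \<one>\<^bsub>mulG B c\<^esub>" "x \<in> B \<Longrightarrow> c x (mi x) = \<one>\<^bsub>mulG B c\<^esub>"
  using M.l_inv M.r_inv by simp_all
lemma passoc: "x \<in> B \<Longrightarrow> y \<in> B \<Longrightarrow> w \<in> B \<Longrightarrow> p (p x y) w = p x (p y w)"
  using A.m_assoc by simp
lemma pcomm: "x \<in> B \<Longrightarrow> y \<in> B \<Longrightarrow> p x y = p y x"
  using A.m_comm by simp
lemma plcomm: "x \<in> B \<Longrightarrow> y \<in> B \<Longrightarrow> w \<in> B \<Longrightarrow> p x (p y w) = p y (p x w)"
  using A.m_lcomm by simp
lemma cassoc: "x \<in> B \<Longrightarrow> y \<in> B \<Longrightarrow> w \<in> B \<Longrightarrow> c (c x y) w = c x (c y w)"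
  using M.m_assoc by simp
lemma c_z: assumes "a \<in> B" shows "c a z = a"
proof -
  have e: "c a z = p (p (c a z) (ng a)) (c a z)" using distr[of a z z] assms by simp
  have u: "p (c a z) (ng a) = z"
    using e assms A.r_cancel_one[of "c a z" "p (c a z) (ng a)"] by simp
  have "c a z = p (p (c a z) (ng a)) a" using assms by (simp add: passoc)
  thus ?thesis using u assms by simp
qed

lemma one_eq: "\<one>\<^bsub>mulG B c\<^esub> = z"
  using c_z[of "\<one>\<^bsub>mulG B c\<^esub>"] cone[of z] M.one_closed by simp


lemma pinv2[simp]: "x \<in> B \<Longrightarrow> y \<in> B \<Longrightarrow> p x (p (ng x) y) = y" "x \<in> B \<Longrightarrow> y \<in> B \<Longrightarrow> p (ng x) (p x y) = y"
  by (simp_all add: passoc[symmetric])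
lemma lam_def': "lam a b = p (ng a) (c a b)" by (simp add: blam_def)
lemma lamB[simp]: "a \<in> B \<Longrightarrow> b \<in> B \<Longrightarrow> lam a b \<in> B" by (simp add: lam_def')
lemma c_lam: assumes "a \<in> B" "b \<in> B" shows "c a b = p a (lam a b)"
  using assms by (simp add: lam_def' passoc[symmetric])
lemma lam_add: assumes "a \<in> B" "b \<in> B" "d \<in> B" shows "lam a (p b d) = p (lam a b) (lam a d)"
  using assms by (simp add: lam_def' distr passoc pcomm plcomm)
lemma lam_z[simp]: "d \<in> B \<Longrightarrow> lam z d = d"
  using one_eq cone[of d] by (simp add: lam_def')
lemma lam_az[simp]: "a \<in> B \<Longrightarrow> lam a z = z"
  by (simp add: lam_def' c_z)
lemma lam_comp: assumes "a \<in> B" "b \<in> B" "d \<in> B" shows "lam (c a b) d = lam a (lam b d)"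
proof -
  have "c (c a b) d = c a (p b (lam b d))" using assms by (simp add: cassoc c_lam[of b d])
  also have "\<dots> = p (p (c a b) (ng a)) (p a (lam a (lam b d)))" using assms by (simp add: distr c_lam[of a "lam b d"])
  also have "\<dots> = p (c a b) (lam a (lam b d))" using assms by (simp add: passoc plcomm[of a "c a b"])
  finally have e: "c (c a b) d = p (c a b) (lam a (lam b d))" .
  show ?thesis using assms by (simp add: lam_def' e passoc[symmetric])
qed
lemma lam_inj: assumes "a \<in> B" "b \<in> B" "d \<in> B" "lam a b = lam a d" shows "b = d"
proof -
  have "c a b = c a d" using assms A.l_cancel[of "ng a" "c a b" "c a d"] by (simp add: lam_def')
  thus ?thesis using assms M.l_cancel[of a b d] by simp
qed
lemma lam_ng: assumes "a \<in> B" "b \<in> B" shows "lam a (ng b) = ng (lam a b)"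
proof -
  have "p (lam a b) (lam a (ng b)) = z" using assms lam_add[of a b "ng b"] by simp
  thus ?thesis using assms A.inv_equality[of "lam a (ng b)" "lam a b"] by (simp add: pcomm)
qed
lemma lam_inv1[simp]: assumes "a \<in> B" "d \<in> B" shows "lam a (lam (mi a) d) = d"
  using assms lam_comp[of a "mi a" d] one_eq by simp
lemma lam_inv2[simp]: assumes "a \<in> B" "d \<in> B" shows "lam (mi a) (lam a d) = d"
  using assms lam_comp[of "mi a" a d] one_eq by simp
lemma bdot_eq: "bdot B p c a b = lam (mi a) b" by (simp add: bdot_def)

lemma cyc: assumes "x \<in> B" "y \<in> B" "w \<in> B"
  shows "bdot B p c (bdot B p c x y) (bdot B p c x w) = lam (mi (p x y)) w"
proof -
  have "c x (lam (mi x) y) = p x y" using assms by (simp add: c_lam)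
  hence "mi (p x y) = c (mi (lam (mi x) y)) (mi x)" using assms M.inv_mult_group[of x "lam (mi x) y"] by simp
  thus ?thesis using assms by (simp add: bdot_eq lam_comp)
qed
lemma cyc_id: assumes "x \<in> B" "y \<in> B" "w \<in> B"
  shows "bdot B p c (bdot B p c x y) (bdot B p c x w) = bdot B p c (bdot B p c y x) (bdot B p c y w)"
  using cyc[OF assms] cyc[of y x w] assms by (simp add: pcomm)


lemma orb_B: assumes "x \<in> B" shows "lam_orbit B p c x \<subseteq> B"
proof
  fix y assume "y \<in> lam_orbit B p c x"
  hence "(x, y) \<in> ({(u, lam a u) | a u. a \<in> B \<and> u \<in> B} \<union> {(u, lam a u) | a u. a \<in> B \<and> u \<in> B}\<inverse>)\<^sup>*"
    by (simp add: lam_orbit_def Let_def)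
  thus "y \<in> B" by (induct rule: rtrancl_induct) (use assms in auto)
qed
lemma orb_refl: "x \<in> lam_orbit B p c x" by (simp add: lam_orbit_def Let_def)
lemma orb_lam: assumes "y \<in> lam_orbit B p c x" "a \<in> B" "y \<in> B" shows "lam a y \<in> lam_orbit B p c x"
proof -
  let ?R = "{(u, lam a u) | a u. a \<in> B \<and> u \<in> B}"
  have "(x, y) \<in> (?R \<union> ?R\<inverse>)\<^sup>*" using assms by (simp add: lam_orbit_def Let_def)
  moreover have "(y, lam a y) \<in> ?R \<union> ?R\<inverse>" using assms by blast
  ultimately have "(x, lam a y) \<in> (?R \<union> ?R\<inverse>)\<^sup>*" by (rule rtrancl_into_rtrancl)
  thus ?thesis by (simp add: lam_orbit_def Let_def)
qed
lemma orb_min: assumes "Y \<subseteq> B" "x \<in> Y" "\<And>a y. a \<in> B \<Longrightarrow> y \<in> Y \<Longrightarrow> lam a y \<in> Y"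
  shows "lam_orbit B p c x \<subseteq> Y"
proof
  fix y assume "y \<in> lam_orbit B p c x"
  hence "(x, y) \<in> ({(u, lam a u) | a u. a \<in> B \<and> u \<in> B} \<union> {(u, lam a u) | a u. a \<in> B \<and> u \<in> B}\<inverse>)\<^sup>*"
    by (simp add: lam_orbit_def Let_def)
  thus "y \<in> Y"
  proof (induct rule: rtrancl_induct)
    case base thus ?case using assms by simp
  next
    case (step u v)
    from step(2) show ?case
    proof
      assume "(u, v) \<in> {(u, lam a u) | a u. a \<in> B \<and> u \<in> B}"
      thus ?thesis using step(3) assms(3) by blast
    next
      assume "(u, v) \<in> {(u, lam a u) | a u. a \<in> B \<and> u \<in> B}\<inverse>"
      then obtain a where a: "a \<in> B" "v \<in> B" "u = lam a v" by blast
      hence "v = lam (mi a) u" by simp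
      thus ?thesis using step(3) assms(3)[of "mi a" u] a by simp
    qed
  qed
qed

lemma cyc_sub: assumes "D \<subseteq> B" "D \<noteq> {}" "\<And>a b. a \<in> D \<Longrightarrow> b \<in> D \<Longrightarrow> bdot B p c a b \<in> D"
  shows "cycle_set D (bdot B p c)"
  unfolding cycle_set_def
proof (intro conjI ballI)
  show "D \<noteq> {}" by fact
  show "bdot B p c x y \<in> D" if "x \<in> D" "y \<in> D" for x y using assms that by blast
  show "bdot B p c (bdot B p c x y) (bdot B p c x w) = bdot B p c (bdot B p c y x) (bdot B p c y w)"
    if "x \<in> D" "y \<in> D" "w \<in> D" for x y w using cyc_id that assms(1) by blast
  fix x assume x: "x \<in> D"
  have "inj_on (bdot B p c x) D" using x assms(1)
    by (intro inj_onI) (metis bdot_eq lam_inj miB subsetD)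
  moreover have "bdot B p c x ` D \<subseteq> D" using assms x by blast
  moreover have "finite D" using fin assms(1) finite_subset by blast
  ultimately show "bij_betw (bdot B p c x) D D" using endo_inj_surj by (simp add: bij_betw_def)
qed


lemma backward:
  assumes tcb: "transitive_cycle_base B p c Cs" and og: "one_generator_cycle_set Cs (bdot B p c)"
  shows "one_generator_brace B p c"
proof -
  from tcb obtain x0 where CsB: "Cs \<subseteq> B" and x0: "Cs = lam_orbit B p c x0" and gen: "generate (addG B p) Cs = B"
    unfolding transitive_cycle_base_def by blast
  from og obtain x where x: "x \<in> Cs" and csg: "cs_gen Cs (bdot B p c) x = Cs"
    unfolding one_generator_cycle_set_def by blast
  have xB: "x \<in> B" using x CsB by blast
  have "brace_gen B p c x = B"
  proof
    have "B \<in> {S. x \<in> S \<and> subgroup S (addG B p) \<and> subgroup S (mulG B c)}"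
      using xB A.subgroup_self M.subgroup_self by simp
    thus "brace_gen B p c x \<subseteq> B" unfolding brace_gen_def by blast
  next
    show "B \<subseteq> brace_gen B p c x" unfolding brace_gen_def
    proof (rule Inter_greatest)
      fix S assume "S \<in> {S. x \<in> S \<and> subgroup S (addG B p) \<and> subgroup S (mulG B c)}"
      hence xS: "x \<in> S" and SA: "subgroup S (addG B p)" and SM: "subgroup S (mulG B c)" by auto
      have SB: "S \<subseteq> B" using SA subgroup.subset by force
      let ?D = "S \<inter> Cs"
      have "cycle_set ?D (bdot B p c)"
      proof (rule cyc_sub)
        show "?D \<subseteq> B" using CsB by blast
        show "?D \<noteq> {}" using xS x by blast
        fix a b assume ab: "a \<in> ?D" "b \<in> ?D"
        have aB: "a \<in> B" "b \<in> B" using ab CsB by auto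
        have "mi a \<in> S" using ab subgroup.m_inv_closed[OF SM] by auto
        hence "ng (mi a) \<in> S" using subgroup.m_inv_closed[OF SA] by auto
        moreover have "c (mi a) b \<in> S" using \<open>mi a \<in> S\<close> ab subgroup.m_closed[OF SM] by fastforce
        ultimately have "p (ng (mi a)) (c (mi a) b) \<in> S" using subgroup.m_closed[OF SA] by fastforce
        hence "bdot B p c a b \<in> S" by (simp add: bdot_eq lam_def')
        moreover have "bdot B p c a b \<in> Cs" unfolding bdot_eq x0
          using orb_lam[of b x0 "mi a"] ab aB x0 by auto
        ultimately show "bdot B p c a b \<in> ?D" by blast
      qed
      hence "?D \<in> {Ds. x \<in> Ds \<and> sub_cycle_set Cs (bdot B p c) Ds}"
        using xS x by (simp add: sub_cycle_set_def)
      hence "Cs \<subseteq> ?D" using csg unfolding cs_gen_def by blast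
      hence "generate (addG B p) Cs \<subseteq> S" using A.generate_subgroup_incl[OF _ SA] by blast
      thus "B \<subseteq> S" using gen by simp
    qed
  qed
  thus ?thesis using xB unfolding one_generator_brace_def by blast
qed


lemma key:
  assumes YB: "Y \<subseteq> B" and cy: "cycle_set Y (bdot B p c)" and xY: "x \<in> Y"
    and bg: "brace_gen B p c x = B" and aB: "a \<in> B" and yY: "y \<in> Y"
  shows "lam a y \<in> Y"
proof -
  define H where "H = {a\<in>B. \<forall>y\<in>Y. lam a y \<in> Y}"
  have finY: "finite Y" using fin YB finite_subset by blast
  have Hinv: "mi a \<in> H" if "a \<in> H" for a
  proof -
    have aB: "a \<in> B" using that H_def by auto
    have "lam a ` Y \<subseteq> Y" using that H_def by auto
    moreover have "inj_on (lam a) Y" using aB YB by (intro inj_onI) (metis lam_inj subsetD)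
    ultimately have im: "lam a ` Y = Y" using endo_inj_surj finY by blast
    have "lam (mi a) y \<in> Y" if "y \<in> Y" for y
    proof -
      obtain w where "w \<in> Y" "y = lam a w" using im \<open>y \<in> Y\<close> by blast
      thus ?thesis using aB YB by auto
    qed
    thus ?thesis using aB H_def by auto
  qed
  have YH: "Y \<subseteq> H"
  proof
    fix y assume y: "y \<in> Y"
    have "mi y \<in> H" using y cy YB unfolding H_def cycle_set_def by (auto simp: bdot_eq)
    hence "mi (mi y) \<in> H" by (rule Hinv)
    thus "y \<in> H" using y YB M.inv_inv[of y] by auto
  qed
  have Hc: "c a b \<in> H" if "a \<in> H" "b \<in> H" for a b
    using that YB unfolding H_def by (auto simp: lam_comp subset_iff)
  have zH: "z \<in> H" unfolding H_def using YB by auto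
  let ?S = "psums z p Y"
  have SH: "s \<in> H" if "s \<in> ?S" for s
    using that
  proof (induct rule: psums.induct)
    case sz thus ?case by (rule zH)
  next
    case (ss s y)
    have sB: "s \<in> B" "y \<in> B" using ss H_def YB by auto
    have "lam (mi s) y \<in> Y" using Hinv[OF ss(2)] ss(3) H_def by auto
    hence "c s (lam (mi s) y) \<in> H" using Hc ss(2) YH by blast
    moreover have "c s (lam (mi s) y) = p s y" using sB by (simp add: c_lam)
    ultimately show ?case by simp
  qed
  have SB: "?S \<subseteq> B" using SH H_def by auto
  have Sp: "p s t \<in> ?S" if "s \<in> ?S" "t \<in> ?S" for s t
    using that(2)
  proof (induct rule: psums.induct)
    case sz thus ?case using that(1) SB by auto
  next
    case (ss t y)
    have "s \<in> B" "t \<in> B" "y \<in> B" using that(1) ss(1) SB YB ss(3) by auto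
    hence "p s (p t y) = p (p s t) y" by (simp add: passoc)
    thus ?case using psums.ss[OF ss(2) ss(3)] by simp
  qed
  have Slam: "lam s t \<in> ?S" if "s \<in> H" "t \<in> ?S" for s t
    using that(2)
  proof (induct rule: psums.induct)
    case sz thus ?case using that(1) H_def by (auto intro: psums.sz)
  next
    case (ss t y)
    have tB: "s \<in> B" "t \<in> B" "y \<in> B" using that(1) H_def ss(1) SB YB ss(3) by auto
    have "lam s y \<in> Y" using that(1) ss(3) H_def by auto
    hence "p (lam s t) (lam s y) \<in> ?S" using psums.ss[OF ss(2)] by blast
    thus ?case using tB by (simp add: lam_add)
  qed
  have SA: "subgroup ?S (addG B p)"
  proof (rule fin_closed_subgroup[OF A.is_group])
    show "finite (carrier (addG B p))" using fin by simp
    show "?S \<subseteq> carrier (addG B p)" using SB by simp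
    show "\<one>\<^bsub>addG B p\<^esub> \<in> ?S" by (rule psums.sz)
    fix s t assume st: "s \<in> ?S" "t \<in> ?S"
    thus "s \<otimes>\<^bsub>addG B p\<^esub> t \<in> ?S" using Sp by simp
  qed
  have SM: "subgroup ?S (mulG B c)"
  proof (rule fin_closed_subgroup[OF M.is_group])
    show "finite (carrier (mulG B c))" using fin by simp
    show "?S \<subseteq> carrier (mulG B c)" using SB by simp
    show "\<one>\<^bsub>mulG B c\<^esub> \<in> ?S" unfolding one_eq by (rule psums.sz)
    fix s t assume st: "s \<in> ?S" "t \<in> ?S"
    have "s \<in> B" "t \<in> B" using st SB by auto
    hence "c s t = p s (lam s t)" by (rule c_lam)
    thus "s \<otimes>\<^bsub>mulG B c\<^esub> t \<in> ?S" using Sp Slam SH st by simp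
  qed
  have "p z x \<in> ?S" by (rule psums.ss[OF psums.sz xY])
  moreover have "p z x = x" using xY YB by auto
  ultimately have "x \<in> ?S" by simp
  hence "brace_gen B p c x \<subseteq> ?S" unfolding brace_gen_def using SA SM by blast
  hence "a \<in> H" using bg aB SH by blast
  thus ?thesis using yY H_def by auto
qed


lemma forward:
  assumes og: "one_generator_brace B p c"
  shows "\<exists>Cs. transitive_cycle_base B p c Cs \<and> one_generator_cycle_set Cs (bdot B p c)"
proof -
  from og obtain x where xB: "x \<in> B" and bg: "brace_gen B p c x = B"
    unfolding one_generator_brace_def by blast
  define Xo where "Xo = lam_orbit B p c x"
  have XB: "Xo \<subseteq> B" using orb_B[OF xB] Xo_def by simp
  have xX: "x \<in> Xo" using orb_refl Xo_def by simp
  let ?G = "generate (addG B p) Xo"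
  have GB: "?G \<subseteq> B" using A.generate_incl[of Xo] XB by simp
  have Glam: "lam a g \<in> ?G" if "a \<in> B" "g \<in> ?G" for a g
    using that(2)
  proof (induct rule: generate.induct)
    case one thus ?case using that(1) generate.one[of "addG B p" Xo] by simp
  next
    case (incl h)
    have "lam a h \<in> Xo" using orb_lam[of h x a] incl that(1) XB Xo_def by auto
    thus ?case by (rule generate.incl)
  next
    case (inv h)
    have hB: "h \<in> B" using inv XB by auto
    have "lam a h \<in> Xo" using orb_lam[of h x a] inv that(1) XB Xo_def by auto
    hence "ng (lam a h) \<in> ?G" by (rule generate.inv)
    thus ?case using lam_ng[OF that(1) hB] by simp
  next
    case (eng h1 h2)
    have "h1 \<in> B" "h2 \<in> B" using eng GB by auto
    hence "lam a (h1 \<otimes>\<^bsub>addG B p\<^esub> h2) = lam a h1 \<otimes>\<^bsub>addG B p\<^esub> lam a h2"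
      using lam_add that(1) by simp
    thus ?case using generate.eng[OF eng(2) eng(4)] by simp
  qed
  have GA: "subgroup ?G (addG B p)" using A.generate_is_subgroup XB by simp
  have GM: "subgroup ?G (mulG B c)"
  proof (rule fin_closed_subgroup[OF M.is_group])
    show "finite (carrier (mulG B c))" using fin by simp
    show "?G \<subseteq> carrier (mulG B c)" using GB by simp
    show "\<one>\<^bsub>mulG B c\<^esub> \<in> ?G" unfolding one_eq by (rule generate.one)
    fix s t assume st: "s \<in> ?G" "t \<in> ?G"
    have "s \<in> B" "t \<in> B" using st GB by auto
    hence e: "c s t = p s (lam s t)" by (rule c_lam)
    have "lam s t \<in> ?G" by (rule Glam[OF \<open>s \<in> B\<close> st(2)])
    hence "s \<otimes>\<^bsub>addG B p\<^esub> lam s t \<in> ?G" by (rule generate.eng[OF st(1)])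
    thus "s \<otimes>\<^bsub>mulG B c\<^esub> t \<in> ?G" using e by simp
  qed
  have "x \<in> ?G" using xX by (rule generate.incl)
  hence "brace_gen B p c x \<subseteq> ?G" unfolding brace_gen_def using GA GM by blast
  hence genB: "?G = B" using bg GB by blast
  have cX: "cycle_set Xo (bdot B p c)"
  proof (rule cyc_sub[OF XB])
    show "Xo \<noteq> {}" using xX by blast
    fix a b assume ab: "a \<in> Xo" "b \<in> Xo"
    have "mi a \<in> B" "b \<in> B" using ab XB by auto
    hence "lam (mi a) b \<in> Xo" using orb_lam[of b x "mi a"] ab(2) unfolding Xo_def by blast
    thus "bdot B p c a b \<in> Xo" by (simp add: bdot_eq)
  qed
  have "cs_gen Xo (bdot B p c) x = Xo"
  proof
    have "Xo \<in> {Ds. x \<in> Ds \<and> sub_cycle_set Xo (bdot B p c) Ds}"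
      using xX cX by (simp add: sub_cycle_set_def)
    thus "cs_gen Xo (bdot B p c) x \<subseteq> Xo" unfolding cs_gen_def by blast
  next
    show "Xo \<subseteq> cs_gen Xo (bdot B p c) x" unfolding cs_gen_def
    proof (rule Inter_greatest)
      fix Y assume "Y \<in> {Ds. x \<in> Ds \<and> sub_cycle_set Xo (bdot B p c) Ds}"
      hence xY: "x \<in> Y" and YX: "Y \<subseteq> Xo" and cY: "cycle_set Y (bdot B p c)"
        by (auto simp: sub_cycle_set_def)
      have YB: "Y \<subseteq> B" using YX XB by blast
      show "Xo \<subseteq> Y" unfolding Xo_def
        by (rule orb_min[OF YB xY]) (rule key[OF YB cY xY bg])
    qed
  qed
  hence "one_generator_cycle_set Xo (bdot B p c)"
    using cX xX unfolding one_generator_cycle_set_def by blast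
  moreover have "transitive_cycle_base B p c Xo"
    unfolding transitive_cycle_base_def using XB xX Xo_def genB by blast
  ultimately show ?thesis by blast
qed


end

theorem mainTheorem8:
  fixes B :: "'a set" and p c :: "'a \<Rightarrow> 'a \<Rightarrow> 'a"
  assumes "brace B p c" and "finite B"
  shows "one_generator_brace B p c \<longleftrightarrow>
         (\<exists>Cs. transitive_cycle_base B p c Cs \<and> one_generator_cycle_set Cs (bdot B p c))"
proof -
  interpret brc B p c using assms by (unfold_locales)
  show ?thesis using forward backward by blast
qed

end
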